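(* Let $F$ be any one of the six faces of the cube $\widehat{\mathbf K}=[-1,1]^3$, let $V_1^F,\dots,V_4^F$ be its four vertices and $M^F$ its centroid. If $p\in\widehat{\mathbb P}^{(1)}_{SK}$ satisfies $p(V_j^F)=0$ for $j=1,2,3,4$ and $p(M^F)=0$, then $\int_F p\,ds=0$.
   Context: Coordinates on $\mathbb R^3$ are $(x_1,x_2,x_3)$; $P_2$ denotes polynomials of total degree at most $2$. The Type 1 Smith–Kidger space is $\widehat{\mathbb P}^{(1)}_{SK}=P_2\oplus\mathrm{Span}\{x_1x_2x_3,\ x_1^2x_2,\ x_2^2x_3,\ x_3^2x_1\}$, considered on $\widehat{\mathbf K}=[-1,1]^3$. *)

theory Defs
  imports "HOL-Analysis.Analysis"
begin

definition SK1 :: "(real^3 \<Rightarrow> real) set" where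
  "SK1 = {p. \<exists>a::nat \<Rightarrow> real. \<forall>x::real^3.
     p x = a 0 + a 1 * x$1 + a 2 * x$2 + a 3 * x$3
         + a 4 * (x$1)^2 + a 5 * (x$2)^2 + a 6 * (x$3)^2
         + a 7 * x$1 * x$2 + a 8 * x$1 * x$3 + a 9 * x$2 * x$3
         + a 10 * x$1 * x$2 * x$3 + a 11 * (x$1)^2 * x$2
         + a 12 * (x$2)^2 * x$3 + a 13 * (x$3)^2 * x$1}"

text \<open>Parametrization of the face {x in [-1,1]^3. x_k = s} (k in {1,2,3}, s in {-1,1})
  by the two remaining coordinates (u,v) in [-1,1]^2, in increasing index order.
  It is an isometry, so ds = du dv.\<close>
definition face_map :: "nat \<Rightarrow> real \<Rightarrow> real \<Rightarrow> real \<Rightarrow> real^3" where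
  "face_map k s u v =
     (if k = 1 then vector [s, u, v] else if k = 2 then vector [u, s, v] else vector [u, v, s])"

end

theory Submission imports Defs begin

lemma int1:
  fixes A B C D :: real
  shows "integral {-1..1} (\<lambda>v::real. A + B* v + C* v^2 + D* v^3) = 2*A + 2/3*C"
proof -
  have "((\<lambda>v::real. A + B* v + C* v^2 + D* v^3) has_integral
        ((\<lambda>v. A* v + B* v^2/2 + C* v^3/3 + D* v^4/4) 1 - (\<lambda>v. A* v + B* v^2/2 + C* v^3/3 + D* v^4/4) (-1))) {-1..1}"
    apply (rule fundamental_theorem_of_calculus)
     apply simp
    apply (rule has_real_derivative_iff_has_vector_derivative[THEN iffD1])
    apply (rule derivative_eq_intros refl | simp)+
    done
  then show ?thesis by (simp add: integral_unique)
qed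

lemma sq_int:
  fixes c0 c1 c2 c3 c4 c5 c6 c7 :: real
  shows "integral (cbox (-1,-1) (1,1)) (\<lambda>(u::real, v::real). c0 + c1* u + c2* v + c3* u^2 + c4* v^2 + c5* u* v + c6* u^2* v + c7* u* v^2)
     = 4*c0 + 4/3*(c3+c4)"
proof -
  have "integral (cbox (-1,-1) (1,1)) (\<lambda>(u::real, v::real). c0 + c1* u + c2* v + c3* u^2 + c4* v^2 + c5* u* v + c6* u^2* v + c7* u* v^2)
     = integral (cbox (-1) 1) (\<lambda>u. integral (cbox (-1) 1) (\<lambda>v. (\<lambda>(u::real, v::real). c0 + c1* u + c2* v + c3* u^2 + c4* v^2 + c5* u* v + c6* u^2* v + c7* u* v^2) (u,v)))"
    by (rule integral_prod_continuous) (auto intro!: continuous_intros simp: case_prod_beta)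
  also have "\<dots> = integral {-1..1} (\<lambda>u. (2*c0 + 2/3*c4) + (2*c1 + 2/3*c7)* u + (2*c3)* u^2 + 0* u^3)"
  proof -
    have "\<And>u. integral {-1..1} (\<lambda>v. (\<lambda>(u::real, v::real). c0 + c1* u + c2* v + c3* u^2 + c4* v^2 + c5* u* v + c6* u^2* v + c7* u* v^2) (u,v))
       = (2*c0 + 2/3*c4) + (2*c1 + 2/3*c7)* u + (2*c3)* u^2 + 0* u^3"
    proof -
      fix u :: real
      have "(\<lambda>v. (\<lambda>(u::real, v::real). c0 + c1* u + c2* v + c3* u^2 + c4* v^2 + c5* u* v + c6* u^2* v + c7* u* v^2) (u,v))
          = (\<lambda>v. (c0 + c1* u + c3* u^2) + (c2 + c5* u + c6* u^2)* v + (c4 + c7* u)* v^2 + 0* v^3)"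
        by (auto simp: algebra_simps)
      then show "integral {-1..1} (\<lambda>v. (\<lambda>(u::real, v::real). c0 + c1* u + c2* v + c3* u^2 + c4* v^2 + c5* u* v + c6* u^2* v + c7* u* v^2) (u,v))
       = (2*c0 + 2/3*c4) + (2*c1 + 2/3*c7)* u + (2*c3)* u^2 + 0* u^3"
        by (simp only: int1) (simp add: algebra_simps)
    qed
    then show ?thesis by simp
  qed
  also have "\<dots> = 4*c0 + 4/3*(c3+c4)" by (subst int1) (simp add: algebra_simps)
  finally show ?thesis .
qed

lemma gen:
  fixes g :: "real \<Rightarrow> real \<Rightarrow> real"
  assumes "\<forall>u v. g u v = ca + cb* u + cc* v + cd* u^2 + ce* v^2 + cf* u* v + cg* u^2* v + ch* u* v^2"
    and "\<forall>u\<in>{-1, 1}. \<forall>v\<in>{-1, 1}. g u v = 0"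
    and "g 0 0 = 0"
  shows "integral (cbox (-1, -1) (1, 1)) (\<lambda>(u, v). g u v) = 0"
proof -
  have "(\<lambda>(u, v). g u v) = (\<lambda>(u::real, v::real). ca + cb* u + cc* v + cd* u^2 + ce* v^2 + cf* u* v + cg* u^2* v + ch* u* v^2)"
    using assms(1) by auto
  then have "integral (cbox (-1, -1) (1, 1)) (\<lambda>(u, v). g u v) = 4*ca + 4/3*(cd+ce)"
    by (simp only: sq_int)
  moreover have "g 1 1 + g 1 (-1) + g (-1) 1 + g (-1) (-1) = 4*ca + 4*(cd+ce)"
    using assms(1) by (simp add: algebra_simps)
  moreover have "ca = 0" using assms(1,3) by simp
  ultimately show ?thesis using assms(2) by simp
qed

theorem lemma2:
  fixes p :: "real^3 \<Rightarrow> real" and k :: nat and s :: real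
  assumes "p \<in> SK1"
    and "k \<in> {1, 2, 3}" and "s \<in> {-1, 1}"
    and "\<forall>u\<in>{-1, 1}. \<forall>v\<in>{-1, 1}. p (face_map k s u v) = 0"
    and "p (face_map k s 0 0) = 0"
  shows "integral (cbox (-1, -1) (1, 1)) (\<lambda>(u, v). p (face_map k s u v)) = 0"
proof -
  obtain a :: "nat \<Rightarrow> real" where a: "\<And>x::real^3. p x = a 0 + a 1 * x$1 + a 2 * x$2 + a 3 * x$3
         + a 4 * (x$1)^2 + a 5 * (x$2)^2 + a 6 * (x$3)^2
         + a 7 * x$1 * x$2 + a 8 * x$1 * x$3 + a 9 * x$2 * x$3
         + a 10 * x$1 * x$2 * x$3 + a 11 * (x$1)^2 * x$2
         + a 12 * (x$2)^2 * x$3 + a 13 * (x$3)^2 * x$1"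
    using assms(1) unfolding SK1_def by blast
  from assms(2) consider "k = 1" | "k = 2" | "k = 3" by blast
  then show ?thesis
  proof cases
    case 1
    show ?thesis
      apply (rule gen[where ca = "a 0 + a 1 * s + a 4 * s^2" and cb = "a 2 + a 7 * s + a 11 * s^2"
          and cc = "a 3 + a 8 * s" and cd = "a 5" and ce = "a 6 + a 13 * s" and cf = "a 9 + a 10 * s"
          and cg = "a 12" and ch = 0])
      using assms(4,5) by (auto simp: face_map_def a 1 algebra_simps)
  next
    case 2
    show ?thesis
      apply (rule gen[where ca = "a 0 + a 2 * s + a 5 * s^2" and cb = "a 1 + a 7 * s"
          and cc = "a 3 + a 9 * s + a 12 * s^2" and cd = "a 4 + a 11 * s" and ce = "a 6" and cf = "a 8 + a 10 * s"
          and cg = 0 and ch = "a 13"])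
      using assms(4,5) by (auto simp: face_map_def a 2 algebra_simps)
  next
    case 3
    show ?thesis
      apply (rule gen[where ca = "a 0 + a 3 * s + a 6 * s^2" and cb = "a 1 + a 8 * s + a 13 * s^2"
          and cc = "a 2 + a 9 * s" and cd = "a 4" and ce = "a 5 + a 12 * s" and cf = "a 7 + a 10 * s"
          and cg = "a 11" and ch = 0])
      using assms(4,5) by (auto simp: face_map_def a 3 algebra_simps)
  qed
qed
end
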